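(* The following hold. 1. Let $C>1$, $k\in\mathbb{N}\setminus\{1\}$ and $p=p(n)\geq Cn^{-2/k}$. If $k'\leq k$ and $F_1:=K_{k'}$, then $\Phi_{F_1}\geq Cn$. 2. Let $C>1$, $k\in\mathbb{N}\setminus\{1\}$ and $p=p(n)\geq Cn^{-2/k}$. Let $3\leq k'\leq k$, let $F_2:=K_{k'}^-$ be the complete graph on $k'$ vertices with one edge removed, and let $w\in V(F_2)$ be one of the endpoints of the removed edge. Then $\Phi_{F_2}\geq Cn$ and $\Phi_{F_2,w}\geq\min\{Cn^{1-\frac{2}{k}},Cn^{\frac{2}{k}}\}\geq Cn^{\frac{1}{k}}$. 3. Let $F_3,F_4$ be graphs with vertex subsets $W_3\subseteq V(F_3)$, $W_4\subseteq V(F_4)$ (each spanning no edges), let $\Phi_3:=\Phi_{F_3,W_3}$ and $\Phi_4:=\Phi_{F_4,W_4}$, and suppose $\Phi_3,\Phi_4\geq1$. Let $F_5$ be the union of $F_3$ and $F_4$ meeting in exactly one vertex $x\in(V(F_3)\setminus W_3)\cap(V(F_4)\setminus W_4)$, and let $F_6$ be the disjoint union of $F_3$ and $F_4$. With $W_5:=W_3\sqcup W_4$, we have $\Phi_{F_5,W_5}\geq\min\{\Phi_3,\Phi_4,\Phi_3\Phi_4n^{-1}\}$ and $\Phi_{F_6,W_5}=\min\{\Phi_3,\Phi_4\}$.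
   Context: For a graph $H$ write $v_H,e_H$ for its numbers of vertices and edges. For a graph $F$, an integer $n$, a probability $p$ and a set $W\subseteq V(F)$ spanning no edges of $F$, define $\Phi_{F,W}=\Phi_{F,W}(n,p):=\min\{n^{v_H-v_{H[W]}}p^{e_H}: H\subseteq F,\ e_H>0\}$, where $v_{H[W]}=|V(H)\cap W|$; and $\Phi_F:=\Phi_{F,\emptyset}=\min\{n^{v_H}p^{e_H}:H\subseteq F, e_H>0\}$. For a single vertex $w$ write $\Phi_{F,w}:=\Phi_{F,\{w\}}$. *)

theory Defs
  imports Complex_Main "HOL-Library.Extended_Real"
begin

type_synonym 'a graph = "'a set \<times> 'a set set"

definition is_graph :: "'a graph \<Rightarrow> bool" where
  "is_graph G \<longleftrightarrow> finite (fst G) \<and>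
     (\<forall>e\<in>snd G. \<exists>x y. x \<noteq> y \<and> x \<in> fst G \<and> y \<in> fst G \<and> e = {x, y})"

definition subgraph :: "'a graph \<Rightarrow> 'a graph \<Rightarrow> bool" where
  "subgraph H G \<longleftrightarrow> is_graph H \<and> fst H \<subseteq> fst G \<and> snd H \<subseteq> snd G"

definition spans_no_edges :: "'a set \<Rightarrow> 'a graph \<Rightarrow> bool" where
  "spans_no_edges W G \<longleftrightarrow> W \<subseteq> fst G \<and> (\<forall>e\<in>snd G. \<not> e \<subseteq> W)"

text \<open>Phi_{F,W}(n,p); the minimum over an empty family is +infinity.\<close>
definition Phi :: "'a graph \<Rightarrow> 'a set \<Rightarrow> nat \<Rightarrow> real \<Rightarrow> ereal" where
  "Phi F W n p = (INF H \<in> {H. subgraph H F \<and> card (snd H) > 0}.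
      ereal (real n ^ (card (fst H) - card (fst H \<inter> W)) * p ^ card (snd H)))"

definition complete_graph :: "nat \<Rightarrow> nat graph" where
  "complete_graph m = ({..<m}, {{i, j} | i j. i < m \<and> j < m \<and> i \<noteq> j})"

definition complete_graph_minus :: "nat \<Rightarrow> nat graph" where
  "complete_graph_minus m = ({..<m}, snd (complete_graph m) - {{0, 1}})"

end

theory Submission
  imports Defs
begin


lemma Phi_ge:
  assumes "\<And>H. subgraph H F \<Longrightarrow> 0 < card (snd H) \<Longrightarrow>
     c \<le> ereal (real n ^ (card (fst H) - card (fst H \<inter> W)) * p ^ card (snd H))"
  shows "c \<le> Phi F W n p"
  unfolding Phi_def by (rule INF_greatest) (use assms in auto)

lemma Phi_le:
  assumes "subgraph H F" "0 < card (snd H)"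
  shows "Phi F W n p \<le> ereal (real n ^ (card (fst H) - card (fst H \<inter> W)) * p ^ card (snd H))"
  unfolding Phi_def by (rule INF_lower) (use assms in auto)

lemma graph_edges_sub:
  assumes "is_graph G"
  shows "snd G \<subseteq> {B. B \<subseteq> fst G \<and> card B = 2}"
  using assms unfolding is_graph_def by auto

lemma graph_finite_edges:
  assumes "is_graph G" shows "finite (snd G)"
proof -
  have "finite {B. B \<subseteq> fst G \<and> card B = 2}" using assms unfolding is_graph_def by auto
  then show ?thesis using graph_edges_sub[OF assms] finite_subset by blast
qed

lemma edge_bound:
  assumes "is_graph G"
  shows "2 * card (snd G) \<le> card (fst G) * (card (fst G) - 1)"
proof -
  have f: "finite (fst G)" using assms unfolding is_graph_def by auto
  have "card (snd G) \<le> card {B. B \<subseteq> fst G \<and> card B = 2}"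
    using graph_edges_sub[OF assms] f by (intro card_mono) auto
  also have "\<dots> = card (fst G) choose 2" using n_subsets[OF f] .
  finally have "card (snd G) \<le> card (fst G) choose 2" .
  moreover have "2 * (card (fst G) choose 2) = card (fst G) * (card (fst G) - 1)"
    using times_binomial_minus1_eq[of 2 "card (fst G)"] by simp
  ultimately show ?thesis by linarith
qed

lemma edge_bound_minus:
  assumes "is_graph G" "{a, b} \<subseteq> fst G" "a \<noteq> b" "{a, b} \<notin> snd G"
  shows "2 * card (snd G) + 2 \<le> card (fst G) * (card (fst G) - 1)"
proof -
  have f: "finite (fst G)" using assms unfolding is_graph_def by auto
  have fin: "finite {B. B \<subseteq> fst G \<and> card B = 2}" using f by auto
  have "card (snd G) \<le> card ({B. B \<subseteq> fst G \<and> card B = 2} - {{a,b}})"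
    using graph_edges_sub[OF assms(1)] assms(4) fin by (intro card_mono) auto
  also have "\<dots> = card {B. B \<subseteq> fst G \<and> card B = 2} - 1"
    using assms(2,3) fin by (subst card_Diff_singleton) auto
  also have "\<dots> = (card (fst G) choose 2) - 1" using n_subsets[OF f] by simp
  finally have "card (snd G) \<le> (card (fst G) choose 2) - 1" .
  moreover have "card (fst G) choose 2 \<ge> 1"
  proof -
    have "{a,b} \<in> {B. B \<subseteq> fst G \<and> card B = 2}" using assms(2,3) by auto
    then have "card {B. B \<subseteq> fst G \<and> card B = 2} > 0" using fin card_gt_0_iff by blast
    then have "2 \<le> card (fst G)" using n_subsets[OF f] by simp
    then show ?thesis by (simp add: Suc_leI)
  qed
  moreover have "2 * (card (fst G) choose 2) = card (fst G) * (card (fst G) - 1)"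
    using times_binomial_minus1_eq[of 2 "card (fst G)"] by simp
  ultimately show ?thesis by linarith
qed

lemma core:
  fixes C p x :: real and n k v e :: nat
  assumes "n \<ge> 1" "C > 1" "k > 0" "p \<ge> C * real n powr (- 2 / real k)" "e \<ge> 1"
    "x \<le> real v - 2 * real e / real k"
  shows "C * real n powr x \<le> real n ^ v * p ^ e"
proof -
  have n0: "real n > 0" using assms by simp
  have q0: "0 \<le> C * real n powr (- 2 / real k)" using assms by simp
  have "(C * real n powr (- 2 / real k)) ^ e \<le> p ^ e" using power_mono[OF assms(4) q0] .
  moreover have "(C * real n powr (- 2 / real k)) ^ e = C ^ e * real n powr (- 2 * real e / real k)"
    using n0 by (simp add: power_mult_distrib powr_realpow[symmetric] powr_powr)
  moreover have "C \<le> C ^ e" using assms by (metis less_imp_le one_le_power power_one_right power_increasing)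
  ultimately have "C * real n powr (- 2 * real e / real k) \<le> p ^ e"
    using n0 by (smt (verit) mult_right_mono powr_ge_zero)
  hence "real n ^ v * (C * real n powr (- 2 * real e / real k)) \<le> real n ^ v * p ^ e"
    by (intro mult_left_mono) auto
  moreover have "real n ^ v * (C * real n powr (- 2 * real e / real k)) = C * real n powr (real v - 2 * real e / real k)"
  proof -
    have "real n ^ v = real n powr real v" using n0 by (simp add: powr_realpow)
    moreover have "real n powr real v * real n powr (- 2 * real e / real k) = real n powr (real v - 2 * real e / real k)"
      by (simp add: powr_add[symmetric])
    ultimately show ?thesis by (simp add: algebra_simps)
  qed
  moreover have "real n powr x \<le> real n powr (real v - 2 * real e / real k)"
    using assms by (intro powr_mono) auto
  ultimately show ?thesis using assms by (smt (verit) mult_left_mono)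
qed

lemma ineq_div:
  fixes k x v e :: real
  assumes "k > 0" "k * x \<le> k * v - 2 * e"
  shows "x \<le> v - 2 * e / k"
  using assms by (simp add: field_simps)

lemma part1:
  fixes C p :: real and k n k' :: nat
  assumes "C > 1" "k \<ge> 2" "n > 0" "p \<ge> C * real n powr (- 2 / real k)" "k' \<le> k"
  shows "ereal (C * real n) \<le> Phi (complete_graph k') {} n p"
proof (rule Phi_ge)
  fix H :: "nat graph"
  assume sub: "subgraph H (complete_graph k')" and e0: "0 < card (snd H)"
  define v where "v = card (fst H)"
  define e where "e = card (snd H)"
  have g: "is_graph H" using sub unfolding subgraph_def by auto
  have eb: "2 * e \<le> v * (v - 1)" using edge_bound[OF g] unfolding v_def e_def .
  have "fst H \<subseteq> {..<k'}" using sub unfolding subgraph_def complete_graph_def by auto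
  hence vk: "v \<le> k" unfolding v_def using assms(5) by (metis card_lessThan card_mono finite_lessThan le_trans)
  have v1: "v \<ge> 1" using eb e0 unfolding e_def by (cases v) auto
  have ebr: "2 * real e \<le> real v * (real v - 1)" using eb v1
    by (metis of_nat_1 of_nat_diff of_nat_le_iff of_nat_mult of_nat_numeral)
  have "(real v - 1) * (real k - real v) \<ge> 0" using v1 vk by (intro mult_nonneg_nonneg) auto
  hence "real k * 1 \<le> real k * real v - 2 * real e" using ebr by (simp add: algebra_simps)
  hence x: "1 \<le> real v - 2 * real e / real k" using assms(2) by (intro ineq_div) auto
  have "C * real n powr 1 \<le> real n ^ v * p ^ e"
    using core[OF _ assms(1) _ assms(4) _ x] assms e0 unfolding e_def by auto
  thus "ereal (C * real n) \<le> ereal (real n ^ (card (fst H) - card (fst H \<inter> {})) * p ^ card (snd H))"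
    using assms(3) unfolding v_def e_def by simp
qed

lemma part2a:
  fixes C p :: real and k n k' :: nat
  assumes "C > 1" "k \<ge> 2" "n > 0" "p \<ge> C * real n powr (- 2 / real k)" "k' \<le> k"
  shows "ereal (C * real n) \<le> Phi (complete_graph_minus k') {} n p"
proof (rule Phi_ge)
  fix H :: "nat graph"
  assume sub: "subgraph H (complete_graph_minus k')" and e0: "0 < card (snd H)"
  define v where "v = card (fst H)"
  define e where "e = card (snd H)"
  have g: "is_graph H" using sub unfolding subgraph_def by auto
  have eb: "2 * e \<le> v * (v - 1)" using edge_bound[OF g] unfolding v_def e_def .
  have "fst H \<subseteq> {..<k'}" using sub unfolding subgraph_def complete_graph_minus_def by auto
  hence vk: "v \<le> k" unfolding v_def using assms(5) by (metis card_lessThan card_mono finite_lessThan le_trans)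
  have v1: "v \<ge> 1" using eb e0 unfolding e_def by (cases v) auto
  have ebr: "2 * real e \<le> real v * (real v - 1)" using eb v1
    by (metis of_nat_1 of_nat_diff of_nat_le_iff of_nat_mult of_nat_numeral)
  have "(real v - 1) * (real k - real v) \<ge> 0" using v1 vk by (intro mult_nonneg_nonneg) auto
  hence "real k * 1 \<le> real k * real v - 2 * real e" using ebr by (simp add: algebra_simps)
  hence x: "1 \<le> real v - 2 * real e / real k" using assms(2) by (intro ineq_div) auto
  have "C * real n powr 1 \<le> real n ^ v * p ^ e"
    using core[OF _ assms(1) _ assms(4) _ x] assms e0 unfolding e_def by auto
  thus "ereal (C * real n) \<le> ereal (real n ^ (card (fst H) - card (fst H \<inter> {})) * p ^ card (snd H))"
    using assms(3) unfolding v_def e_def by simp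
qed


lemma part2b:
  fixes C p :: real and k n k' w :: nat
  assumes "C > 1" "k \<ge> 2" "n > 0" "p \<ge> C * real n powr (- 2 / real k)" "k' \<le> k" "3 \<le> k'" "w \<in> {0, 1}"
  shows "ereal (min (C * real n powr (1 - 2 / real k)) (C * real n powr (2 / real k))) \<le> Phi (complete_graph_minus k') {w} n p"
proof (rule Phi_ge)
  fix H :: "nat graph"
  assume sub: "subgraph H (complete_graph_minus k')" and e0: "0 < card (snd H)"
  define v where "v = card (fst H)"
  define e where "e = card (snd H)"
  define w' :: nat where "w' = 1 - w"
  have ww: "w \<noteq> w'" "{w, w'} = {0, 1}" using assms(7) unfolding w'_def by auto
  have g: "is_graph H" using sub unfolding subgraph_def by auto
  have fin: "finite (fst H)" using g unfolding is_graph_def by auto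
  have eb: "2 * e \<le> v * (v - 1)" using edge_bound[OF g] unfolding v_def e_def .
  have fk: "fst H \<subseteq> {..<k'}" using sub unfolding subgraph_def complete_graph_minus_def by auto
  hence vk: "v \<le> k" unfolding v_def using assms(5) by (metis card_lessThan card_mono finite_lessThan le_trans)
  have v1: "v \<ge> 1" using eb e0 unfolding e_def by (cases v) auto
  have ebr: "2 * real e \<le> real v * (real v - 1)" using eb v1
    by (metis of_nat_1 of_nat_diff of_nat_le_iff of_nat_mult of_nat_numeral)
  have kpos: "real k > 0" using assms(2) by auto
  have e1: "e \<ge> 1" using e0 unfolding e_def by auto
  let ?m = "min (C * real n powr (1 - 2 / real k)) (C * real n powr (2 / real k))"
  have main: "?m \<le> real n ^ (v - card (fst H \<inter> {w})) * p ^ e"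
  proof (cases "w \<in> fst H")
    case False
    hence ex: "v - card (fst H \<inter> {w}) = v" by auto
    have "(real v - 1) * (real k - real v) \<ge> 0" using v1 vk by (intro mult_nonneg_nonneg) auto
    hence "real k * (1 - 2 / real k) \<le> real k * real v - 2 * real e" using ebr kpos by (simp add: algebra_simps)
    hence x: "1 - 2 / real k \<le> real v - 2 * real e / real k" using kpos by (intro ineq_div) auto
    have "C * real n powr (1 - 2 / real k) \<le> real n ^ v * p ^ e"
      using core[OF _ assms(1) _ assms(4) e1 x] assms by auto
    thus ?thesis using ex by simp
  next
    case True
    hence ex: "v - card (fst H \<inter> {w}) = v - 1" by auto
    have rv: "real (v - 1) = real v - 1" using v1 by simp
    show ?thesis
    proof (cases "w' \<in> fst H")
      case False
      have "fst H \<subseteq> {..<k'} - {w'}" using fk False by auto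
      moreover have "w' < k'" using assms(6) unfolding w'_def by auto
      ultimately have "v \<le> k' - 1" unfolding v_def
        by (metis card_Diff_singleton card_lessThan card_mono finite_Diff finite_lessThan lessThan_iff)
      hence vk1: "real v \<le> real k - 1" using assms(5,6) by linarith
      have v2: "v \<ge> 2"
      proof (rule ccontr)
        assume "\<not> v \<ge> 2" hence "v = 1" using v1 by auto
        thus False using eb e1 by auto
      qed
      have "(real v - 2) * (real k - 1 - real v) \<ge> 0" using v2 vk1 by (intro mult_nonneg_nonneg) auto
      hence "real k * (1 - 2 / real k) \<le> real k * (real v - 1) - 2 * real e" using ebr kpos by (simp add: algebra_simps)
      hence x: "1 - 2 / real k \<le> real (v - 1) - 2 * real e / real k" unfolding rv using kpos by (intro ineq_div) auto
      have "C * real n powr (1 - 2 / real k) \<le> real n ^ (v - 1) * p ^ e"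
        using core[OF _ assms(1) _ assms(4) e1 x] assms by auto
      thus ?thesis using ex by simp
    next
      case True2: True
      have "{w, w'} \<notin> snd H" using sub ww unfolding subgraph_def complete_graph_minus_def by auto
      hence eb2: "2 * e + 2 \<le> v * (v - 1)" using edge_bound_minus[OF g _ ww(1)] True True2 unfolding v_def e_def by auto
      hence "2 * real e + 2 \<le> real v * (real v - 1)" using v1
        by (metis (mono_tags, opaque_lifting) of_nat_1 of_nat_add of_nat_diff of_nat_le_iff of_nat_mult of_nat_numeral)
      moreover have "(real v - 1) * (real k - real v) \<ge> 0" using v1 vk by (intro mult_nonneg_nonneg) auto
      ultimately have "real k * (2 / real k) \<le> real k * (real v - 1) - 2 * real e" using kpos by (simp add: algebra_simps)
      hence x: "2 / real k \<le> real (v - 1) - 2 * real e / real k" unfolding rv using kpos by (intro ineq_div) auto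
      have "C * real n powr (2 / real k) \<le> real n ^ (v - 1) * p ^ e"
        using core[OF _ assms(1) _ assms(4) e1 x] assms by auto
      thus ?thesis using ex by simp
    qed
  qed
  thus "ereal ?m \<le> ereal (real n ^ (card (fst H) - card (fst H \<inter> {w})) * p ^ card (snd H))"
    unfolding v_def e_def by (simp only: ereal_less_eq)
qed

lemma part2c:
  fixes C :: real and k n :: nat
  assumes "C > 1" "k \<ge> 3" "n > 0"
  shows "C * real n powr (1 / real k) \<le> min (C * real n powr (1 - 2 / real k)) (C * real n powr (2 / real k))"
proof -
  have a: "1 / real k \<le> 1 - 2 / real k" using assms(2) by (simp add: field_simps)
  have b: "1 / real k \<le> 2 / real k" using assms(2) by (simp add: field_simps)
  have "real n powr (1 / real k) \<le> real n powr (1 - 2 / real k)" using a assms by (intro powr_mono) auto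
  moreover have "real n powr (1 / real k) \<le> real n powr (2 / real k)" using b assms by (intro powr_mono) auto
  ultimately show ?thesis using assms(1) by simp
qed



definition tm :: "nat \<Rightarrow> real \<Rightarrow> 'a set \<Rightarrow> 'a graph \<Rightarrow> real" where
  "tm n p W H = real n ^ (card (fst H) - card (fst H \<inter> W)) * p ^ card (snd H)"

lemma Phi_geT:
  assumes "\<And>H. subgraph H F \<Longrightarrow> 0 < card (snd H) \<Longrightarrow> c \<le> ereal (tm n p W H)"
  shows "c \<le> Phi F W n p"
  using assms unfolding tm_def by (rule Phi_ge)

lemma Phi_leT:
  assumes "subgraph H F" "0 < card (snd H)"
  shows "Phi F W n p \<le> ereal (tm n p W H)"
  using Phi_le[OF assms] unfolding tm_def .

lemma restrict_sub:
  assumes "is_graph F" "is_graph H"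
  shows "subgraph (fst H \<inter> fst F, snd H \<inter> snd F) F"
proof -
  have "is_graph (fst H \<inter> fst F, snd H \<inter> snd F)"
    unfolding is_graph_def
  proof (intro conjI ballI)
    show "finite (fst (fst H \<inter> fst F, snd H \<inter> snd F))" using assms(2) unfolding is_graph_def by auto
  next
    fix e assume "e \<in> snd (fst H \<inter> fst F, snd H \<inter> snd F)"
    hence e: "e \<in> snd H" "e \<in> snd F" by auto
    obtain a b where ab: "a \<noteq> b" "a \<in> fst F" "b \<in> fst F" "e = {a, b}" using assms(1) e(2) unfolding is_graph_def by blast
    obtain c d where cd: "c \<noteq> d" "c \<in> fst H" "d \<in> fst H" "e = {c, d}" using assms(2) e(1) unfolding is_graph_def by blast
    have "a \<in> fst H" "b \<in> fst H" using ab(4) cd by (auto simp: doubleton_eq_iff)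
    thus "\<exists>x y. x \<noteq> y \<and> x \<in> fst (fst H \<inter> fst F, snd H \<inter> snd F) \<and> y \<in> fst (fst H \<inter> fst F, snd H \<inter> snd F) \<and> e = {x, y}"
      using ab by auto
  qed
  thus ?thesis unfolding subgraph_def by auto
qed

lemma edges_disj:
  assumes "is_graph F3" "is_graph F4" "fst F3 \<inter> fst F4 \<subseteq> {x}"
  shows "snd F3 \<inter> snd F4 = {}"
proof (rule ccontr)
  assume "snd F3 \<inter> snd F4 \<noteq> {}"
  then obtain e where e: "e \<in> snd F3" "e \<in> snd F4" by auto
  obtain a b where ab: "a \<noteq> b" "a \<in> fst F3" "b \<in> fst F3" "e = {a, b}" using assms(1) e(1) unfolding is_graph_def by blast
  obtain c d where cd: "c \<noteq> d" "c \<in> fst F4" "d \<in> fst F4" "e = {c, d}" using assms(2) e(2) unfolding is_graph_def by blast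
  have "a \<in> fst F4" "b \<in> fst F4" using ab(4) cd by (auto simp: doubleton_eq_iff)
  thus False using ab assms(3) by auto
qed

lemma card_minus_int: "finite A \<Longrightarrow> card A - card (A \<inter> W) = card (A - W)"
  by (simp add: card_Diff_subset_Int)

lemma decomp:
  assumes g3: "is_graph F3" and g4: "is_graph F4"
    and s3: "spans_no_edges W3 F3" and s4: "spans_no_edges W4 F4"
    and inter: "fst F3 \<inter> fst F4 \<subseteq> {x}" and x3: "fst F3 \<inter> fst F4 \<inter> W3 = {}" and x4: "fst F3 \<inter> fst F4 \<inter> W4 = {}"
    and sub: "subgraph H (fst F3 \<union> fst F4, snd F3 \<union> snd F4)"
  shows "subgraph (fst H \<inter> fst F3, snd H \<inter> snd F3) F3"
    "subgraph (fst H \<inter> fst F4, snd H \<inter> snd F4) F4"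
    "card (snd H) = card (snd H \<inter> snd F3) + card (snd H \<inter> snd F4)"
    "(card (fst H) - card (fst H \<inter> (W3 \<union> W4))) + card (fst H \<inter> fst F3 \<inter> fst F4)
       = (card (fst H \<inter> fst F3) - card (fst H \<inter> fst F3 \<inter> W3)) + (card (fst H \<inter> fst F4) - card (fst H \<inter> fst F4 \<inter> W4))"
    "card (fst H \<inter> fst F3 \<inter> fst F4) \<le> 1"
    "card (fst H \<inter> fst F3 \<inter> fst F4) \<le> card (fst H \<inter> fst F3) - card (fst H \<inter> fst F3 \<inter> W3)"
    "card (fst H \<inter> fst F3 \<inter> fst F4) \<le> card (fst H \<inter> fst F4) - card (fst H \<inter> fst F4 \<inter> W4)"
proof -
  have gH: "is_graph H" using sub unfolding subgraph_def by auto
  have fH: "finite (fst H)" using gH unfolding is_graph_def by auto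
  show "subgraph (fst H \<inter> fst F3, snd H \<inter> snd F3) F3" by (rule restrict_sub[OF g3 gH])
  show "subgraph (fst H \<inter> fst F4, snd H \<inter> snd F4) F4" by (rule restrict_sub[OF g4 gH])
  have fE: "finite (snd H)" using graph_finite_edges[OF gH] .
  have "snd H = (snd H \<inter> snd F3) \<union> (snd H \<inter> snd F4)" using sub unfolding subgraph_def by auto
  moreover have "(snd H \<inter> snd F3) \<inter> (snd H \<inter> snd F4) = {}" using edges_disj[OF g3 g4 inter] by auto
  ultimately show "card (snd H) = card (snd H \<inter> snd F3) + card (snd H \<inter> snd F4)"
    using fE by (metis card_Un_disjoint finite_Int)
  have W3s: "W3 \<subseteq> fst F3" and W4s: "W4 \<subseteq> fst F4" using s3 s4 unfolding spans_no_edges_def by auto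
  define A where "A = fst H - (W3 \<union> W4)"
  define A3 where "A3 = fst H \<inter> fst F3 - W3"
  define A4 where "A4 = fst H \<inter> fst F4 - W4"
  define I where "I = fst H \<inter> fst F3 \<inter> fst F4"
  have VH: "fst H \<subseteq> fst F3 \<union> fst F4" using sub unfolding subgraph_def by auto
  have IA3: "I \<subseteq> A3" "I \<subseteq> A4" using inter x3 x4 unfolding I_def A3_def A4_def by auto
  have "A = A3 \<union> A4" using VH W3s W4s inter x3 x4 unfolding A_def A3_def A4_def by blast
  moreover have "A3 \<inter> A4 = I" using IA3 unfolding A3_def A4_def I_def by blast
  moreover have "finite A3" "finite A4" using fH unfolding A3_def A4_def by auto
  ultimately have "card A + card I = card A3 + card A4" by (metis card_Un_Int)
  moreover have "card A = card (fst H) - card (fst H \<inter> (W3 \<union> W4))" unfolding A_def using fH by (simp add: card_minus_int)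
  moreover have c3: "card A3 = card (fst H \<inter> fst F3) - card (fst H \<inter> fst F3 \<inter> W3)" unfolding A3_def using fH by (simp add: card_minus_int)
  moreover have c4: "card A4 = card (fst H \<inter> fst F4) - card (fst H \<inter> fst F4 \<inter> W4)" unfolding A4_def using fH by (simp add: card_minus_int)
  ultimately show "(card (fst H) - card (fst H \<inter> (W3 \<union> W4))) + card (fst H \<inter> fst F3 \<inter> fst F4)
       = (card (fst H \<inter> fst F3) - card (fst H \<inter> fst F3 \<inter> W3)) + (card (fst H \<inter> fst F4) - card (fst H \<inter> fst F4 \<inter> W4))"
    unfolding I_def by simp
  have "I \<subseteq> {x}" using inter unfolding I_def by auto
  hence "card I \<le> card {x}" by (intro card_mono) auto
  thus "card (fst H \<inter> fst F3 \<inter> fst F4) \<le> 1" unfolding I_def by simp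
  have "card I \<le> card A3" "card I \<le> card A4" using IA3 \<open>finite A3\<close> \<open>finite A4\<close> by (auto intro: card_mono)
  thus "card (fst H \<inter> fst F3 \<inter> fst F4) \<le> card (fst H \<inter> fst F3) - card (fst H \<inter> fst F3 \<inter> W3)"
    "card (fst H \<inter> fst F3 \<inter> fst F4) \<le> card (fst H \<inter> fst F4) - card (fst H \<inter> fst F4 \<inter> W4)"
    using c3 c4 unfolding I_def by simp_all
qed



lemma part3a:
  fixes F3 F4 :: "'a graph"
  assumes n0: "n > 0" and p0: "0 \<le> p" and g3: "is_graph F3" and g4: "is_graph F4"
    and s3: "spans_no_edges W3 F3" and s4: "spans_no_edges W4 F4"
    and P3: "Phi F3 W3 n p \<ge> 1" and P4: "Phi F4 W4 n p \<ge> 1"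
    and inter: "fst F3 \<inter> fst F4 = {x}" and x3: "x \<notin> W3" and x4: "x \<notin> W4"
  shows "min (Phi F3 W3 n p) (min (Phi F4 W4 n p) (Phi F3 W3 n p * Phi F4 W4 n p / ereal (real n)))
    \<le> Phi (fst F3 \<union> fst F4, snd F3 \<union> snd F4) (W3 \<union> W4) n p"
proof (rule Phi_geT)
  fix H :: "'a graph"
  assume sub: "subgraph H (fst F3 \<union> fst F4, snd F3 \<union> snd F4)" and e0: "0 < card (snd H)"
  have inter': "fst F3 \<inter> fst F4 \<subseteq> {x}" using inter by auto
  have x3': "fst F3 \<inter> fst F4 \<inter> W3 = {}" "fst F3 \<inter> fst F4 \<inter> W4 = {}" using inter x3 x4 by auto
  note D = decomp[OF g3 g4 s3 s4 inter' x3' sub]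
  define H3 where "H3 = (fst H \<inter> fst F3, snd H \<inter> snd F3)"
  define H4 where "H4 = (fst H \<inter> fst F4, snd H \<inter> snd F4)"
  define a where "a = card (fst H) - card (fst H \<inter> (W3 \<union> W4))"
  define a3 where "a3 = card (fst H \<inter> fst F3) - card (fst H \<inter> fst F3 \<inter> W3)"
  define a4 where "a4 = card (fst H \<inter> fst F4) - card (fst H \<inter> fst F4 \<inter> W4)"
  define i where "i = card (fst H \<inter> fst F3 \<inter> fst F4)"
  define e3 where "e3 = card (snd H \<inter> snd F3)"
  define e4 where "e4 = card (snd H \<inter> snd F4)"
  have sub3: "subgraph H3 F3" and sub4: "subgraph H4 F4" using D(1,2) unfolding H3_def H4_def .
  have ee: "card (snd H) = e3 + e4" using D(3) unfolding e3_def e4_def .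
  have aa: "a + i = a3 + a4" using D(4) unfolding a_def a3_def a4_def i_def .
  have i1: "i \<le> 1" "i \<le> a3" "i \<le> a4" using D(5,6,7) unfolding i_def a3_def a4_def by auto
  have t: "tm n p (W3 \<union> W4) H = real n ^ a * p ^ (e3 + e4)" unfolding tm_def a_def ee ..
  have t3: "tm n p W3 H3 = real n ^ a3 * p ^ e3" unfolding tm_def a3_def e3_def H3_def by simp
  have t4: "tm n p W4 H4 = real n ^ a4 * p ^ e4" unfolding tm_def a4_def e4_def H4_def by simp
  have n1: "real n \<ge> 1" using n0 by simp
  let ?m = "min (Phi F3 W3 n p) (min (Phi F4 W4 n p) (Phi F3 W3 n p * Phi F4 W4 n p / ereal (real n)))"
  show "?m \<le> ereal (tm n p (W3 \<union> W4) H)"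
  proof (cases "e3 = 0")
    case True
    hence e4p: "0 < card (snd H4)" using e0 ee unfolding H4_def e4_def by simp
    have "a4 \<le> a" using aa i1 by linarith
    hence "real n ^ a4 \<le> real n ^ a" using n1 power_increasing by blast
    hence "tm n p W4 H4 \<le> tm n p (W3 \<union> W4) H" unfolding t t4 using True p0
      by (simp add: mult_right_mono)
    moreover have "Phi F4 W4 n p \<le> ereal (tm n p W4 H4)" by (rule Phi_leT[OF sub4 e4p])
    ultimately have "Phi F4 W4 n p \<le> ereal (tm n p (W3 \<union> W4) H)" by (meson ereal_less_eq(3) order_trans)
    thus ?thesis by (meson min.coboundedI2 min.coboundedI1 order_trans)
  next
    case False
    hence e3p: "0 < card (snd H3)" unfolding H3_def e3_def by simp
    show ?thesis
    proof (cases "e4 = 0")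
      case True
      have "a3 \<le> a" using aa i1 by linarith
      hence "real n ^ a3 \<le> real n ^ a" using n1 power_increasing by blast
      hence "tm n p W3 H3 \<le> tm n p (W3 \<union> W4) H" unfolding t t3 using True p0
        by (simp add: mult_right_mono)
      moreover have "Phi F3 W3 n p \<le> ereal (tm n p W3 H3)" by (rule Phi_leT[OF sub3 e3p])
      ultimately have "Phi F3 W3 n p \<le> ereal (tm n p (W3 \<union> W4) H)" by (meson ereal_less_eq(3) order_trans)
      thus ?thesis by (meson min.coboundedI1 order_trans)
    next
      case False
      hence e4p: "0 < card (snd H4)" unfolding H4_def e4_def by simp
      have "real n ^ a * real n ^ i = real n ^ a3 * real n ^ a4" by (metis aa power_add)
      hence prod: "tm n p (W3 \<union> W4) H * real n ^ i = tm n p W3 H3 * tm n p W4 H4"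
        unfolding t t3 t4 by (simp add: power_add algebra_simps)
      have "real n ^ i \<le> real n ^ 1" using n1 i1(1) power_increasing by blast
      moreover have tnn: "tm n p (W3 \<union> W4) H \<ge> 0" unfolding t using p0 by simp
      ultimately have "tm n p W3 H3 * tm n p W4 H4 \<le> tm n p (W3 \<union> W4) H * real n"
        unfolding prod[symmetric] by (simp add: mult_left_mono)
      hence le: "tm n p W3 H3 * tm n p W4 H4 / real n \<le> tm n p (W3 \<union> W4) H"
        using n0 by (simp add: divide_le_eq)
      have L3: "Phi F3 W3 n p \<le> ereal (tm n p W3 H3)" by (rule Phi_leT[OF sub3 e3p])
      have L4: "Phi F4 W4 n p \<le> ereal (tm n p W4 H4)" by (rule Phi_leT[OF sub4 e4p])
      have "Phi F3 W3 n p * Phi F4 W4 n p \<le> ereal (tm n p W3 H3) * ereal (tm n p W4 H4)"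
        using L3 L4 P3 P4 p0 unfolding t3 t4 by (intro ereal_mult_mono) (auto intro: order_trans[rotated])
      hence "Phi F3 W3 n p * Phi F4 W4 n p / ereal (real n) \<le> ereal (tm n p W3 H3 * tm n p W4 H4) / ereal (real n)"
        using n0 by (intro ereal_divide_right_mono) auto
      also have "\<dots> = ereal (tm n p W3 H3 * tm n p W4 H4 / real n)" using n0 by simp
      also have "\<dots> \<le> ereal (tm n p (W3 \<union> W4) H)" using le by simp
      finally show ?thesis by (meson min.coboundedI2 order_trans)
    qed
  qed
qed



lemma part3b_ge:
  fixes F3 F4 :: "'a graph"
  assumes n0: "n > 0" and p0: "0 \<le> p" and g3: "is_graph F3" and g4: "is_graph F4"
    and s3: "spans_no_edges W3 F3" and s4: "spans_no_edges W4 F4"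
    and P3: "Phi F3 W3 n p \<ge> 1" and P4: "Phi F4 W4 n p \<ge> 1"
    and inter: "fst F3 \<inter> fst F4 = {}"
  shows "min (Phi F3 W3 n p) (Phi F4 W4 n p)
    \<le> Phi (fst F3 \<union> fst F4, snd F3 \<union> snd F4) (W3 \<union> W4) n p"
proof (rule Phi_geT)
  fix H :: "'a graph"
  assume sub: "subgraph H (fst F3 \<union> fst F4, snd F3 \<union> snd F4)" and e0: "0 < card (snd H)"
  have inter': "fst F3 \<inter> fst F4 \<subseteq> {undefined}" using inter by auto
  have x3': "fst F3 \<inter> fst F4 \<inter> W3 = {}" "fst F3 \<inter> fst F4 \<inter> W4 = {}" using inter by auto
  note D = decomp[OF g3 g4 s3 s4 inter' x3' sub]
  define H3 where "H3 = (fst H \<inter> fst F3, snd H \<inter> snd F3)"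
  define H4 where "H4 = (fst H \<inter> fst F4, snd H \<inter> snd F4)"
  define a where "a = card (fst H) - card (fst H \<inter> (W3 \<union> W4))"
  define a3 where "a3 = card (fst H \<inter> fst F3) - card (fst H \<inter> fst F3 \<inter> W3)"
  define a4 where "a4 = card (fst H \<inter> fst F4) - card (fst H \<inter> fst F4 \<inter> W4)"
  define e3 where "e3 = card (snd H \<inter> snd F3)"
  define e4 where "e4 = card (snd H \<inter> snd F4)"
  have sub3: "subgraph H3 F3" and sub4: "subgraph H4 F4" using D(1,2) unfolding H3_def H4_def .
  have ee: "card (snd H) = e3 + e4" using D(3) unfolding e3_def e4_def .
  have aa: "a = a3 + a4" using D(4) inter unfolding a_def a3_def a4_def by (simp add: Int_assoc)
  have t: "tm n p (W3 \<union> W4) H = (real n ^ a3 * p ^ e3) * (real n ^ a4 * p ^ e4)"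
    unfolding tm_def a_def[symmetric] ee aa by (simp add: power_add algebra_simps)
  have t3: "tm n p W3 H3 = real n ^ a3 * p ^ e3" unfolding tm_def a3_def e3_def H3_def by simp
  have t4: "tm n p W4 H4 = real n ^ a4 * p ^ e4" unfolding tm_def a4_def e4_def H4_def by simp
  have n1: "real n \<ge> 1" using n0 by simp
  show "min (Phi F3 W3 n p) (Phi F4 W4 n p) \<le> ereal (tm n p (W3 \<union> W4) H)"
  proof (cases "e3 = 0")
    case True
    hence e4p: "0 < card (snd H4)" using e0 ee unfolding H4_def e4_def by simp
    have "1 \<le> real n ^ a3" using n1 by simp
    hence "tm n p W4 H4 \<le> tm n p (W3 \<union> W4) H" unfolding t t4 using True p0
      mult_right_mono[of 1 "real n ^ a3" "real n ^ a4 * p ^ e4"] by simp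
    moreover have "Phi F4 W4 n p \<le> ereal (tm n p W4 H4)" by (rule Phi_leT[OF sub4 e4p])
    ultimately have "Phi F4 W4 n p \<le> ereal (tm n p (W3 \<union> W4) H)" by (meson ereal_less_eq(3) order_trans)
    thus ?thesis by (meson min.coboundedI2 order_trans)
  next
    case False
    hence e3p: "0 < card (snd H3)" unfolding H3_def e3_def by simp
    have L3: "Phi F3 W3 n p \<le> ereal (tm n p W3 H3)" by (rule Phi_leT[OF sub3 e3p])
    have "1 \<le> real n ^ a4 * p ^ e4"
    proof (cases "e4 = 0")
      case True thus ?thesis using n1 by simp
    next
      case False
      hence e4p: "0 < card (snd H4)" unfolding H4_def e4_def by simp
      have "Phi F4 W4 n p \<le> ereal (tm n p W4 H4)" by (rule Phi_leT[OF sub4 e4p])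
      hence "ereal 1 \<le> ereal (tm n p W4 H4)" using P4 by (metis one_ereal_def order_trans)
      thus ?thesis unfolding t4 by simp
    qed
    hence "tm n p W3 H3 \<le> tm n p (W3 \<union> W4) H" unfolding t t3 using p0
      mult_left_mono[of 1 "real n ^ a4 * p ^ e4" "real n ^ a3 * p ^ e3"] by simp
    hence "Phi F3 W3 n p \<le> ereal (tm n p (W3 \<union> W4) H)" using L3 by (meson ereal_less_eq(3) order_trans)
    thus ?thesis by (meson min.coboundedI1 order_trans)
  qed
qed

lemma part3b_le3:
  fixes F3 F4 :: "'a graph"
  assumes g3: "is_graph F3" and s4: "spans_no_edges W4 F4" and inter: "fst F3 \<inter> fst F4 = {}"
  shows "Phi (fst F3 \<union> fst F4, snd F3 \<union> snd F4) (W3 \<union> W4) n p \<le> Phi F3 W3 n p"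
proof (rule Phi_geT)
  fix H :: "'a graph"
  assume sub: "subgraph H F3" and e0: "0 < card (snd H)"
  have "subgraph H (fst F3 \<union> fst F4, snd F3 \<union> snd F4)" using sub unfolding subgraph_def by auto
  hence "Phi (fst F3 \<union> fst F4, snd F3 \<union> snd F4) (W3 \<union> W4) n p \<le> ereal (tm n p (W3 \<union> W4) H)"
    using e0 by (rule Phi_leT)
  moreover have "fst H \<inter> (W3 \<union> W4) = fst H \<inter> W3"
    using sub s4 inter unfolding subgraph_def spans_no_edges_def by auto
  ultimately show "Phi (fst F3 \<union> fst F4, snd F3 \<union> snd F4) (W3 \<union> W4) n p \<le> ereal (tm n p W3 H)"
    unfolding tm_def by simp
qed

lemma part3b_le4:
  fixes F3 F4 :: "'a graph"
  assumes g4: "is_graph F4" and s3: "spans_no_edges W3 F3" and inter: "fst F3 \<inter> fst F4 = {}"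
  shows "Phi (fst F3 \<union> fst F4, snd F3 \<union> snd F4) (W3 \<union> W4) n p \<le> Phi F4 W4 n p"
proof (rule Phi_geT)
  fix H :: "'a graph"
  assume sub: "subgraph H F4" and e0: "0 < card (snd H)"
  have "subgraph H (fst F3 \<union> fst F4, snd F3 \<union> snd F4)" using sub unfolding subgraph_def by auto
  hence "Phi (fst F3 \<union> fst F4, snd F3 \<union> snd F4) (W3 \<union> W4) n p \<le> ereal (tm n p (W3 \<union> W4) H)"
    using e0 by (rule Phi_leT)
  moreover have "fst H \<inter> (W3 \<union> W4) = fst H \<inter> W4"
    using sub s3 inter unfolding subgraph_def spans_no_edges_def by auto
  ultimately show "Phi (fst F3 \<union> fst F4, snd F3 \<union> snd F4) (W3 \<union> W4) n p \<le> ereal (tm n p W4 H)"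
    unfolding tm_def by simp
qed


theorem lemma2p7:
  shows
  "(\<forall>(C::real) (k::nat) (n::nat) (p::real) (k'::nat).
      C > 1 \<longrightarrow> k \<ge> 2 \<longrightarrow> n > 0 \<longrightarrow> p \<ge> C * real n powr (- 2 / real k) \<longrightarrow> p \<le> 1 \<longrightarrow>
      k' \<le> k \<longrightarrow> Phi (complete_graph k') {} n p \<ge> ereal (C * real n))
   \<and>
   (\<forall>(C::real) (k::nat) (n::nat) (p::real) (k'::nat) (w::nat).
      C > 1 \<longrightarrow> k \<ge> 2 \<longrightarrow> n > 0 \<longrightarrow> p \<ge> C * real n powr (- 2 / real k) \<longrightarrow> p \<le> 1 \<longrightarrow>
      3 \<le> k' \<longrightarrow> k' \<le> k \<longrightarrow> w \<in> {0, 1} \<longrightarrow>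
      Phi (complete_graph_minus k') {} n p \<ge> ereal (C * real n) \<and>
      Phi (complete_graph_minus k') {w} n p
        \<ge> ereal (min (C * real n powr (1 - 2 / real k)) (C * real n powr (2 / real k))) \<and>
      min (C * real n powr (1 - 2 / real k)) (C * real n powr (2 / real k))
        \<ge> C * real n powr (1 / real k))
   \<and>
   (\<forall>(n::nat) (p::real) (F3::'a graph) (F4::'a graph) W3 W4.
      n > 0 \<longrightarrow> 0 \<le> p \<longrightarrow> p \<le> 1 \<longrightarrow> is_graph F3 \<longrightarrow> is_graph F4 \<longrightarrow>
      spans_no_edges W3 F3 \<longrightarrow> spans_no_edges W4 F4 \<longrightarrow>
      Phi F3 W3 n p \<ge> 1 \<longrightarrow> Phi F4 W4 n p \<ge> 1 \<longrightarrow>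
      (\<forall>x. fst F3 \<inter> fst F4 = {x} \<longrightarrow> x \<notin> W3 \<longrightarrow> x \<notin> W4 \<longrightarrow>
         Phi (fst F3 \<union> fst F4, snd F3 \<union> snd F4) (W3 \<union> W4) n p
           \<ge> min (Phi F3 W3 n p) (min (Phi F4 W4 n p)
                 (Phi F3 W3 n p * Phi F4 W4 n p / ereal (real n))))
      \<and>
      (fst F3 \<inter> fst F4 = {} \<longrightarrow>
         Phi (fst F3 \<union> fst F4, snd F3 \<union> snd F4) (W3 \<union> W4) n p
           = min (Phi F3 W3 n p) (Phi F4 W4 n p)))"
  apply (intro conjI)
  subgoal by (intro allI impI, rule part1) assumption+
  subgoal
    apply (intro allI impI conjI)
      apply (rule part2a; assumption)
     apply (rule part2b; assumption)
    apply (rule part2c, assumption, linarith, assumption)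
    done
  subgoal
    apply (intro allI impI conjI)
     apply (rule part3a; assumption)
    apply (rule antisym)
     apply (rule min.boundedI)
      apply (rule part3b_le3; assumption)
     apply (rule part3b_le4; assumption)
    apply (rule part3b_ge; assumption)
    done
  done

end
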